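(* For every function $f_1:\mathbb{N}\times\mathbb{N}\to\mathbb{N}$ there exists a function $f_2:\mathbb{N}\times\mathbb{N}\to\mathbb{N}$ with $f_2\ge f_1$ such that the following holds. Let $G=(V,E)$ be a graph of pathwidth $\mathrm{pw}$ and maximum degree $\Delta$, let $F\subseteq V$ be a set of initially burned vertices with $|F|\le f_1(\mathrm{pw},\Delta)$, and let the budget be any $b\ge1$. Then there exists a protection strategy for the firefighter process on $G$ started from the burned set $F$ such that at most $f_2(\mathrm{pw},\Delta)$ vertices are burned at the end of the process.
   Context: Firefighter process with initial burned set $F$: at step $t=0$ all vertices of $F$ are burned. At every step $t>0$: (1) protection phase: at most $b$ vertices not yet burned become protected; (2) spreading phase: every unprotected vertex adjacent to a burned vertex becomes burned. Burned and protected vertices stay so; the process stops when no new vertex can become burned. A protection strategy specifies which vertices to protect at each step. Pathwidth and maximum degree are the standard notions. *)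

theory Defs
  imports Main
begin

definition graph :: "'a set \<Rightarrow> ('a \<Rightarrow> 'a \<Rightarrow> bool) \<Rightarrow> bool" where
  "graph V E \<longleftrightarrow> finite V \<and> (\<forall>u v. E u v \<longrightarrow> u \<in> V \<and> v \<in> V \<and> u \<noteq> v \<and> E v u)"

definition degree :: "'a set \<Rightarrow> ('a \<Rightarrow> 'a \<Rightarrow> bool) \<Rightarrow> 'a \<Rightarrow> nat" where
  "degree V E v = card {u \<in> V. E v u}"

definition max_degree :: "'a set \<Rightarrow> ('a \<Rightarrow> 'a \<Rightarrow> bool) \<Rightarrow> nat" where
  "max_degree V E = (if V = {} then 0 else Max (degree V E ` V))"

definition path_decomposition :: "'a set \<Rightarrow> ('a \<Rightarrow> 'a \<Rightarrow> bool) \<Rightarrow> 'a set list \<Rightarrow> bool" where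
  "path_decomposition V E Bs \<longleftrightarrow>
     (\<Union>(set Bs)) = V \<and>
     (\<forall>u v. E u v \<longrightarrow> (\<exists>i < length Bs. u \<in> Bs ! i \<and> v \<in> Bs ! i)) \<and>
     (\<forall>v i j k. i \<le> j \<longrightarrow> j \<le> k \<longrightarrow> k < length Bs \<longrightarrow>
        v \<in> Bs ! i \<longrightarrow> v \<in> Bs ! k \<longrightarrow> v \<in> Bs ! j)"

definition has_pd_of_width :: "'a set \<Rightarrow> ('a \<Rightarrow> 'a \<Rightarrow> bool) \<Rightarrow> nat \<Rightarrow> bool" where
  "has_pd_of_width V E k \<longleftrightarrow>
     (\<exists>Bs. path_decomposition V E Bs \<and> (\<forall>B \<in> set Bs. card B \<le> k + 1))"

definition pathwidth :: "'a set \<Rightarrow> ('a \<Rightarrow> 'a \<Rightarrow> bool) \<Rightarrow> nat" where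
  "pathwidth V E = (LEAST k. has_pd_of_width V E k)"

text \<open>Firefighter process. A strategy S gives, for each step t \<ge> 1, the set S t of
  vertices protected at step t.\<close>
fun protected :: "(nat \<Rightarrow> 'a set) \<Rightarrow> nat \<Rightarrow> 'a set" where
  "protected S 0 = {}"
| "protected S (Suc t) = protected S t \<union> S (Suc t)"

fun burned :: "('a \<Rightarrow> 'a \<Rightarrow> bool) \<Rightarrow> 'a set \<Rightarrow> (nat \<Rightarrow> 'a set) \<Rightarrow> nat \<Rightarrow> 'a set" where
  "burned E F S 0 = F"
| "burned E F S (Suc t) = burned E F S t \<union>
     {v. v \<notin> protected S (Suc t) \<and> (\<exists>u \<in> burned E F S t. E u v)}"

definition valid_strategy ::
  "'a set \<Rightarrow> ('a \<Rightarrow> 'a \<Rightarrow> bool) \<Rightarrow> 'a set \<Rightarrow> nat \<Rightarrow> (nat \<Rightarrow> 'a set) \<Rightarrow> bool" where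
  "valid_strategy V E F b S \<longleftrightarrow>
     (\<forall>t. finite (S (Suc t)) \<and> card (S (Suc t)) \<le> b \<and>
          S (Suc t) \<subseteq> V - burned E F S t)"

definition final_burned :: "('a \<Rightarrow> 'a \<Rightarrow> bool) \<Rightarrow> 'a set \<Rightarrow> (nat \<Rightarrow> 'a set) \<Rightarrow> 'a set" where
  "final_burned E F S = (\<Union>t. burned E F S t)"

end

theory Submission
  imports Defs
begin

fun ballA :: "('a \<Rightarrow> 'a \<Rightarrow> bool) \<Rightarrow> 'a set \<Rightarrow> 'a set \<Rightarrow> nat \<Rightarrow> 'a set" where
  "ballA E P F 0 = F"
| "ballA E P F (Suc t) = ballA E P F t \<union> {v. v \<notin> P \<and> (\<exists>u\<in>ballA E P F t. E u v)}"

definition reach :: "('a \<Rightarrow> 'a \<Rightarrow> bool) \<Rightarrow> 'a set \<Rightarrow> 'a set \<Rightarrow> 'a set" where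
  "reach E P F = (\<Union>t. ballA E P F t)"

lemma ball_mono_t: "t \<le> t' \<Longrightarrow> ballA E P F t \<subseteq> ballA E P F t'"
  by (induction t' ) (auto simp: le_Suc_eq)

lemma ball_anti_P: "P \<subseteq> P' \<Longrightarrow> ballA E P' F t \<subseteq> ballA E P F t"
  by (induction t) auto

lemma ball_subset: "(\<forall>u v. E u v \<longrightarrow> v \<in> V) \<Longrightarrow> F \<subseteq> V \<Longrightarrow> ballA E P F t \<subseteq> V"
  by (induction t) auto

lemma ball_notP: "x \<in> ballA E P F t \<Longrightarrow> x \<notin> F \<Longrightarrow> x \<notin> P"
  by (induction t) auto

lemma ball_card:
  assumes "finite F" "\<forall>v. finite {u. E v u}" "\<forall>v. card {u. E v u} \<le> D"
  shows "finite (ballA E P F t) \<and> card (ballA E P F t) \<le> card F * (D+1)^t"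
proof (induction t)
  case 0 then show ?case using assms by auto
next
  case (Suc t)
  let ?B = "ballA E P F t"
  let ?N = "{v. v \<notin> P \<and> (\<exists>u\<in>?B. E u v)}"
  have sub: "?N \<subseteq> (\<Union>u\<in>?B. {v. E u v})" by auto
  have fU: "finite (\<Union>u\<in>?B. {v. E u v})" using Suc assms by auto
  have "card ?N \<le> card (\<Union>u\<in>?B. {v. E u v})" using sub fU card_mono by blast
  also have "\<dots> \<le> (\<Sum>u\<in>?B. card {v. E u v})" by (rule card_UN_le) (use Suc in auto)
  also have "\<dots> \<le> card ?B * D" using sum_bounded_above[of ?B "\<lambda>u. card {v. E u v}" D] assms by auto
  finally have cN: "card ?N \<le> card ?B * D" .
  have "card (?B \<union> ?N) \<le> card ?B + card ?N" by (rule card_Un_le)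
  also have "\<dots> \<le> card ?B * (D+1)" using cN by simp
  also have "\<dots> \<le> card F * (D+1)^t * (D+1)" using Suc mult_le_mono1 by blast
  finally show ?case using Suc fU sub finite_subset by (auto simp: mult.commute mult.left_commute)
qed

lemma ball_conn:
  "x \<in> ballA E P F t \<Longrightarrow> \<exists>f\<in>F. (\<lambda>a b. E a b \<and> a \<in> ballA E P F t \<and> b \<in> ballA E P F t)\<^sup>*\<^sup>* f x"
proof (induction t arbitrary: x)
  case 0 then show ?case by auto
next
  case (Suc t)
  have mono: "(\<lambda>a b. E a b \<and> a \<in> ballA E P F t \<and> b \<in> ballA E P F t)\<^sup>*\<^sup>* \<le>
     (\<lambda>a b. E a b \<and> a \<in> ballA E P F (Suc t) \<and> b \<in> ballA E P F (Suc t))\<^sup>*\<^sup>*"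
    by (rule rtranclp_mono) auto
  show ?case
  proof (cases "x \<in> ballA E P F t")
    case True then show ?thesis using Suc.IH mono by blast
  next
    case False
    then obtain u where u: "u \<in> ballA E P F t" "E u x" using Suc.prems by auto
    then obtain f where f: "f \<in> F" "(\<lambda>a b. E a b \<and> a \<in> ballA E P F t \<and> b \<in> ballA E P F t)\<^sup>*\<^sup>* f u"
      using Suc.IH by blast
    have "(\<lambda>a b. E a b \<and> a \<in> ballA E P F (Suc t) \<and> b \<in> ballA E P F (Suc t))\<^sup>*\<^sup>* f u" using f mono by blast
    moreover have "E u x \<and> u \<in> ballA E P F (Suc t) \<and> x \<in> ballA E P F (Suc t)" using u Suc.prems by auto
    ultimately have "(\<lambda>a b. E a b \<and> a \<in> ballA E P F (Suc t) \<and> b \<in> ballA E P F (Suc t))\<^sup>*\<^sup>* f x"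
      by (rule rtranclp.rtrancl_into_rtrancl)
    then show ?thesis using f(1) by blast
  qed
qed

lemma rc_sym:
  assumes "\<forall>u v. E u v \<longrightarrow> E v u"
  shows "(\<lambda>a b. E a b \<and> a \<in> C \<and> b \<in> C)\<^sup>*\<^sup>* x y \<Longrightarrow> (\<lambda>a b. E a b \<and> a \<in> C \<and> b \<in> C)\<^sup>*\<^sup>* y x"
proof (induction rule: rtranclp_induct)
  case base then show ?case by simp
next
  case (step y z)
  then have "(\<lambda>a b. E a b \<and> a \<in> C \<and> b \<in> C) z y" using assms by auto
  then show ?case using step(3) by (rule converse_rtranclp_into_rtranclp)
qed

lemma rc_mono: "C \<subseteq> C' \<Longrightarrow> (\<lambda>a b. E a b \<and> a \<in> C \<and> b \<in> C)\<^sup>*\<^sup>* x y \<Longrightarrow> (\<lambda>a b. E a b \<and> a \<in> C' \<and> b \<in> C')\<^sup>*\<^sup>* x y"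
  by (erule rtranclp_mono[THEN predicate2D, rotated]) auto

lemma pd_walk:
  assumes pd: "path_decomposition V E Bs"
  shows "(\<lambda>a b. E a b \<and> a \<in> C \<and> b \<in> C)\<^sup>*\<^sup>* x y \<Longrightarrow> x \<in> C \<Longrightarrow> a < length Bs \<Longrightarrow> c < length Bs \<Longrightarrow>
     x \<in> Bs!a \<Longrightarrow> y \<in> Bs!c \<Longrightarrow> min a c \<le> j \<Longrightarrow> j \<le> max a c \<Longrightarrow> \<exists>z\<in>C. z \<in> Bs!j"
proof (induction arbitrary: c rule: rtranclp_induct)
  case base
  have "x \<in> Bs!j" using pd base unfolding path_decomposition_def
    by (metis max_less_iff_conj min_def max_def)
  then show ?case using base by auto
next
  case (step y z)
  obtain e where e: "e < length Bs" "y \<in> Bs!e" "z \<in> Bs!e" using pd step(2) unfolding path_decomposition_def by blast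
  show ?case
  proof (cases "min a e \<le> j \<and> j \<le> max a e")
    case True then show ?thesis using step e by blast
  next
    case False
    then have "min e c \<le> j \<and> j \<le> max e c" using step.prems by auto
    then have "z \<in> Bs!j" using pd e step.prems unfolding path_decomposition_def
      by (metis max_less_iff_conj min_def max_def)
    then show ?thesis using step(2) by auto
  qed
qed


lemma count_boundary:
  assumes pd: "path_decomposition V E Bs" and sym: "\<forall>u v. E u v \<longrightarrow> E v u"
    and W: "W = ballA E {} F s"
    and T1: "\<forall>i\<in>T. i < length Bs \<and> Bs!i \<inter> W = {}"
    and T2: "\<forall>i\<in>T. q i < length Bs \<and> Bs!(q i) \<inter> W \<noteq> {}"
    and T3: "\<forall>i\<in>T. \<forall>i'\<in>T. i < i' \<longrightarrow> (\<exists>j\<in>{i,i'}. min (q i) (q i') \<le> j \<and> j \<le> max (q i) (q i'))"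
    and fin: "finite F"
  shows "card T \<le> card F"
proof -
  let ?R = "\<lambda>a b. E a b \<and> a \<in> W \<and> b \<in> W"
  define h where "h i = (SOME f. f \<in> F \<and> (\<exists>w\<in>W. w \<in> Bs!(q i) \<and> ?R\<^sup>*\<^sup>* f w))" for i
  have hP: "h i \<in> F \<and> (\<exists>w\<in>W. w \<in> Bs!(q i) \<and> ?R\<^sup>*\<^sup>* (h i) w)" if iT: "i \<in> T" for i
  proof -
    obtain w where w: "w \<in> Bs!(q i)" "w \<in> W" using T2 iT by auto
    then obtain f where "f \<in> F" "?R\<^sup>*\<^sup>* f w" using ball_conn[of w E "{}" F s] W by auto
    then have "\<exists>f. f \<in> F \<and> (\<exists>w\<in>W. w \<in> Bs!(q i) \<and> ?R\<^sup>*\<^sup>* f w)" using w by blast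
    then show ?thesis unfolding h_def by (rule someI_ex)
  qed
  have key: False if th: "i \<in> T" "i' \<in> T" "i < i'" "h i = h i'" for i i'
  proof -
    obtain w where w: "w \<in> W" "w \<in> Bs!(q i)" "?R\<^sup>*\<^sup>* (h i) w" using hP[OF th(1)] by blast
    obtain w' where w': "w' \<in> W" "w' \<in> Bs!(q i')" "?R\<^sup>*\<^sup>* (h i') w'" using hP[OF th(2)] by blast
    have "?R\<^sup>*\<^sup>* w (h i)" using rc_sym[OF sym w(3)] .
    then have p: "?R\<^sup>*\<^sup>* w w'" using w'(3) th(4) by simp
    obtain j where j: "j \<in> {i,i'}" "min (q i) (q i') \<le> j" "j \<le> max (q i) (q i')" using T3 th(1-3) by blast
    obtain z where "z \<in> W" "z \<in> Bs!j"
      using pd_walk[OF pd p w(1) _ _ w(2) w'(2) j(2,3)] T2 th(1,2) by blast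
    then show False using T1 j(1) th(1,2) by blast
  qed
  have "inj_on h T"
    by (rule inj_onI) (metis key linorder_neqE_nat)
  moreover have "h ` T \<subseteq> F" using hP by auto
  ultimately show ?thesis using card_inj_on_le fin by blast
qed


fun g :: "nat \<Rightarrow> nat \<Rightarrow> nat \<Rightarrow> nat" where
  "g 0 D n = 0"
| "g (Suc k) D n = n*(D+1)^(2*n*Suc k) + g k D (D*(n*(D+1)^(2*n*Suc k)))"

lemma ball_empty: "ballA E P {} t = {}"
  by (induction t) auto

lemma main:
  "graph V E \<Longrightarrow> path_decomposition V E Bs \<Longrightarrow> \<forall>B\<in>set Bs. card B \<le> k \<Longrightarrow>
   \<forall>v. card {u. E v u} \<le> D \<Longrightarrow> F \<subseteq> V \<Longrightarrow> card F \<le> n \<Longrightarrow>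
   \<exists>xs. set xs \<subseteq> V \<and> (\<forall>j<length xs. xs!j \<notin> ballA E (set (take j xs)) F j) \<and>
        finite (reach E (set xs) F) \<and> card (reach E (set xs) F) \<le> g k D n"
proof (induction k arbitrary: V E Bs F n)
  case 0
  have "\<forall>B\<in>set Bs. B = {}"
  proof
    fix B assume B: "B \<in> set Bs"
    have "B \<subseteq> V" using B 0(2) unfolding path_decomposition_def by auto
    then have "finite B" using 0(1) unfolding graph_def by (auto intro: finite_subset)
    then show "B = {}" using 0(3) B by auto
  qed
  then have "V = {}" using 0(2) unfolding path_decomposition_def by auto
  then have "F = {}" using 0 by auto
  then show ?case by (intro exI[of _ "[]"]) (simp add: reach_def ball_empty)
next
  case (Suc k)
  note gr = Suc.prems(1) and pd = Suc.prems(2) and bags = Suc.prems(3) and deg = Suc.prems(4)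
    and FV = Suc.prems(5) and cF = Suc.prems(6)
  have fV: "finite V" and Ein: "\<forall>u v. E u v \<longrightarrow> u \<in> V \<and> v \<in> V" and sym: "\<forall>u v. E u v \<longrightarrow> E v u"
    using gr unfolding graph_def by auto
  have finN: "\<forall>v. finite {u. E v u}" using fV Ein by (auto intro: finite_subset)
  have fF: "finite F" using FV fV finite_subset by blast
  have unionV: "\<Union>(set Bs) = V" using pd unfolding path_decomposition_def by auto
  have bagV: "\<And>i. i < length Bs \<Longrightarrow> Bs!i \<subseteq> V" using unionV nth_mem by blast
  have bagfin: "\<And>i. i < length Bs \<Longrightarrow> finite (Bs!i)" using bagV fV finite_subset by blast
  have bagcard: "\<And>i. i < length Bs \<Longrightarrow> card (Bs!i) \<le> Suc k" using bags nth_mem by blast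
  have inbag: "\<And>v. v \<in> V \<Longrightarrow> \<exists>a<length Bs. v \<in> Bs!a" using unionV by (auto simp: in_set_conv_nth)
  define s where "s = 2*n*Suc k"
  define W where "W = ballA E {} F s"
  define I where "I = {i. i < length Bs \<and> Bs!i \<inter> W \<noteq> {}}"
  define Lb where "Lb = {i. i < length Bs \<and> Bs!i \<inter> W = {} \<and> Suc i \<in> I}"
  define Rb where "Rb = {i. i < length Bs \<and> Bs!i \<inter> W = {} \<and> (\<exists>j. i = Suc j \<and> j \<in> I)}"
  define X1 where "X1 = (\<Union>i\<in>Lb\<union>Rb. Bs!i)"
  define R1 where "R1 = reach E X1 F"
  define V' where "V' = R1 - W"
  define E' where "E' = (\<lambda>u v. E u v \<and> u \<in> V' \<and> v \<in> V')"
  define F' where "F' = {v\<in>V'. \<exists>w\<in>W. E w v}"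
  define Bs' where "Bs' = map (\<lambda>B. B \<inter> V') Bs"
  define n' where "n' = D*(n*(D+1)^s)"
  have WV: "W \<subseteq> V" unfolding W_def using ball_subset Ein FV by metis
  have FW: "F \<subseteq> W" unfolding W_def using ball_mono_t[of 0 s E "{}" F] by simp
  have cW: "finite W \<and> card W \<le> n*(D+1)^s"
  proof -
    have "finite W \<and> card W \<le> card F * (D+1)^s" unfolding W_def using ball_card[OF fF finN deg] by blast
    then show ?thesis using cF mult_le_mono1 order_trans by blast
  qed
  have X1W: "X1 \<inter> W = {}" unfolding X1_def Lb_def Rb_def by auto
  have LRfin: "finite (Lb \<union> Rb)" unfolding Lb_def Rb_def by auto
  have X1V: "X1 \<subseteq> V" unfolding X1_def Lb_def Rb_def using bagV by auto
  have fX1: "finite X1" using X1V fV finite_subset by blast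
  have cLb: "card Lb \<le> card F"
    apply (rule count_boundary[OF pd sym W_def, where q=Suc])
    unfolding Lb_def I_def using fF by auto
  have cRb: "card Rb \<le> card F"
  proof (rule count_boundary[OF pd sym W_def, where q="\<lambda>i. i - 1"])
    show "\<forall>i\<in>Rb. i < length Bs \<and> Bs ! i \<inter> W = {}" unfolding Rb_def by auto
    show "\<forall>i\<in>Rb. i - 1 < length Bs \<and> Bs ! (i - 1) \<inter> W \<noteq> {}" unfolding Rb_def I_def by auto
    show "\<forall>i\<in>Rb. \<forall>i'\<in>Rb. i < i' \<longrightarrow> (\<exists>j\<in>{i, i'}. min (i - 1) (i' - 1) \<le> j \<and> j \<le> max (i - 1) (i' - 1))"
      unfolding Rb_def by auto
  qed (rule fF)
  have cX1: "card X1 \<le> s"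
  proof -
    have "card X1 \<le> (\<Sum>i\<in>Lb\<union>Rb. card (Bs!i))" unfolding X1_def by (rule card_UN_le[OF LRfin])
    also have "\<dots> \<le> card (Lb\<union>Rb) * Suc k"
      using sum_bounded_above[of "Lb\<union>Rb" "\<lambda>i. card (Bs!i)" "Suc k"] bagcard
      by (auto simp: Lb_def Rb_def)
    also have "\<dots> \<le> (card Lb + card Rb) * Suc k" by (intro mult_le_mono1 card_Un_le)
    also have "\<dots> \<le> (n + n) * Suc k" using cLb cRb cF by (intro mult_le_mono1) simp
    finally show ?thesis unfolding s_def by (simp add: algebra_simps mult_2)
  qed
  have R1V: "R1 \<subseteq> V" unfolding R1_def reach_def using ball_subset[of E V F] Ein FV by blast
  have R1X1: "R1 \<inter> X1 = {}" unfolding R1_def reach_def using ball_notP FW X1W by fastforce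
  have sep: "c \<in> I" if y: "y \<in> R1" "c < length Bs" "y \<in> Bs!c" for y c
  proof -
    obtain t where yt: "y \<in> ballA E X1 F t" using y(1) unfolding R1_def reach_def by auto
    define C where "C = ballA E X1 F t"
    obtain f where f: "f \<in> F" "(\<lambda>a b. E a b \<and> a \<in> C \<and> b \<in> C)\<^sup>*\<^sup>* f y"
      using ball_conn[OF yt] unfolding C_def by blast
    have fC: "f \<in> C" unfolding C_def using f(1) ball_mono_t[of 0 t E X1 F] by auto
    have CX1: "C \<inter> X1 = {}" using R1X1 unfolding C_def R1_def reach_def by blast
    obtain a where a: "a < length Bs" "f \<in> Bs!a" using inbag f(1) FV by blast
    have aI: "a \<in> I" unfolding I_def using a f(1) FW by auto
    have up: "a + d \<le> c \<longrightarrow> a + d \<in> I" for d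
    proof (induction d)
      case 0 then show ?case using aI by simp
    next
      case (Suc d)
      show ?case
      proof
        assume le: "a + Suc d \<le> c"
        show "a + Suc d \<in> I"
        proof (rule ccontr)
          assume nI: "a + Suc d \<notin> I"
          have lt: "a + Suc d < length Bs" using le y(2) by simp
          have "a + d \<in> I" using Suc le by simp
          then have "a + Suc d \<in> Rb" using nI lt unfolding Rb_def I_def by auto
          then have sub: "Bs!(a + Suc d) \<subseteq> X1" unfolding X1_def by auto
          obtain z where "z \<in> C" "z \<in> Bs!(a + Suc d)"
            using pd_walk[OF pd f(2) fC a(1) y(2) a(2) y(3), of "a + Suc d"] le by auto
          then show False using sub CX1 by auto
        qed
      qed
    qed
    have down: "d \<le> a \<and> c \<le> a - d \<longrightarrow> a - d \<in> I" for d
    proof (induction d)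
      case 0 then show ?case using aI by simp
    next
      case (Suc d)
      show ?case
      proof
        assume le: "Suc d \<le> a \<and> c \<le> a - Suc d"
        show "a - Suc d \<in> I"
        proof (rule ccontr)
          assume nI: "a - Suc d \<notin> I"
          have lt: "a - Suc d < length Bs" using le a(1) by simp
          have "c \<le> a - d" using le by linarith
          then have "a - d \<in> I" using Suc le by linarith
          moreover have "Suc (a - Suc d) = a - d" using le by (simp add: Suc_diff_Suc)
          ultimately have "a - Suc d \<in> Lb" using nI lt unfolding Lb_def I_def by auto
          then have sub: "Bs!(a - Suc d) \<subseteq> X1" unfolding X1_def by auto
          obtain z where "z \<in> C" "z \<in> Bs!(a - Suc d)"
            using pd_walk[OF pd f(2) fC a(1) y(2) a(2) y(3), of "a - Suc d"] le by auto
          then show False using sub CX1 by auto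
        qed
      qed
    qed
    show ?thesis
    proof (cases "a \<le> c")
      case True then show ?thesis using up[of "c - a"] by simp
    next
      case False then show ?thesis using down[of "a - c"] by simp
    qed
  qed
  have V'V: "V' \<subseteq> V" unfolding V'_def using R1V by auto
  have gr': "graph V' E'" using gr V'V fV finite_subset unfolding graph_def E'_def by blast
  have pd': "path_decomposition V' E' Bs'"
  proof -
    have nth': "\<And>i. i < length Bs \<Longrightarrow> Bs'!i = Bs!i \<inter> V'" unfolding Bs'_def by simp
    have l': "length Bs' = length Bs" unfolding Bs'_def by simp
    have "\<Union>(set Bs') = V'" using unionV V'V unfolding Bs'_def by auto
    moreover have "\<forall>u v. E' u v \<longrightarrow> (\<exists>i < length Bs'. u \<in> Bs' ! i \<and> v \<in> Bs' ! i)"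
    proof (intro allI impI)
      fix u v assume e: "E' u v"
      then obtain i where "i < length Bs" "u \<in> Bs!i" "v \<in> Bs!i"
        using pd unfolding E'_def path_decomposition_def by blast
      then show "\<exists>i < length Bs'. u \<in> Bs' ! i \<and> v \<in> Bs' ! i" using e nth' l' unfolding E'_def by auto
    qed
    moreover have "\<forall>v i j k. i \<le> j \<longrightarrow> j \<le> k \<longrightarrow> k < length Bs' \<longrightarrow>
        v \<in> Bs' ! i \<longrightarrow> v \<in> Bs' ! k \<longrightarrow> v \<in> Bs' ! j"
    proof (intro allI impI)
      fix v i j k assume h: "i \<le> j" "j \<le> k" "k < length Bs'" "v \<in> Bs' ! i" "v \<in> Bs' ! k"
      have lt: "i < length Bs" "j < length Bs" "k < length Bs" using h l' by auto
      have "v \<in> Bs!i" "v \<in> Bs!k" "v \<in> V'" using h(4,5) nth' lt by auto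
      then have "v \<in> Bs!j" using pd h(1,2) lt(3) unfolding path_decomposition_def by blast
      then show "v \<in> Bs' ! j" using \<open>v \<in> V'\<close> nth' lt by auto
    qed
    ultimately show ?thesis unfolding path_decomposition_def by blast
  qed
  have bags': "\<forall>B\<in>set Bs'. card B \<le> k"
  proof
    fix B assume "B \<in> set Bs'"
    then obtain i where i: "i < length Bs" "B = Bs!i \<inter> V'" unfolding Bs'_def by (auto simp: in_set_conv_nth)
    show "card B \<le> k"
    proof (cases "i \<in> I")
      case True
      then obtain w where w: "w \<in> Bs!i" "w \<in> W" unfolding I_def by auto
      have "B \<subseteq> Bs!i - {w}" using i w unfolding V'_def by auto
      then have "card B \<le> card (Bs!i - {w})" using bagfin[OF i(1)] by (intro card_mono) auto
      also have "\<dots> = card (Bs!i) - 1" using w bagfin[OF i(1)] by simp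
      finally show ?thesis using bagcard[OF i(1)] by simp
    next
      case False
      have "B = {}" using sep False i unfolding V'_def by auto
      then show ?thesis by simp
    qed
  qed
  have deg': "\<forall>v. card {u. E' v u} \<le> D"
  proof
    fix v
    have "card {u. E' v u} \<le> card {u. E v u}" using finN unfolding E'_def by (intro card_mono) auto
    then show "card {u. E' v u} \<le> D" using deg le_trans by blast
  qed
  have F'V': "F' \<subseteq> V'" unfolding F'_def by auto
  have cF': "card F' \<le> n'"
  proof -
    have sub: "F' \<subseteq> (\<Union>w\<in>W. {u. E w u})" unfolding F'_def by auto
    have "card F' \<le> card (\<Union>w\<in>W. {u. E w u})" using sub cW finN by (intro card_mono) auto
    also have "\<dots> \<le> (\<Sum>w\<in>W. card {u. E w u})" using cW by (intro card_UN_le) auto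
    also have "\<dots> \<le> card W * D" using deg sum_bounded_above[of W "\<lambda>w. card {u. E w u}" D] by auto
    also have "\<dots> \<le> n*(D+1)^s * D" using cW by (intro mult_le_mono1) auto
    finally show ?thesis unfolding n'_def by (simp add: mult.commute)
  qed
  obtain X' where X': "set X' \<subseteq> V'" "\<forall>j<length X'. X'!j \<notin> ballA E' (set (take j X')) F' j"
      "finite (reach E' (set X') F')" "card (reach E' (set X') F') \<le> g k D n'"
    using Suc.IH[OF gr' pd' bags' deg' F'V' cF'] by blast
  have ball'V: "ballA E' Q F' t \<subseteq> V'" for Q t
    using ball_subset[of E' V' F' Q t] F'V' unfolding E'_def by blast
  have toR1: "ballA E (X1 \<union> Q) F m \<subseteq> R1" for Q m
    unfolding R1_def reach_def using ball_anti_P[of X1 "X1 \<union> Q" E F m] by blast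
  have claim: "ballA E (X1 \<union> Q) F (s + 1 + t) \<subseteq> W \<union> ballA E' Q F' t" for Q t
  proof (induction t)
    case 0
    have sW: "ballA E (X1 \<union> Q) F s \<subseteq> W" unfolding W_def by (rule ball_anti_P) simp
    show ?case
    proof
      fix x assume x: "x \<in> ballA E (X1 \<union> Q) F (s + 1 + 0)"
      show "x \<in> W \<union> ballA E' Q F' 0"
      proof (cases "x \<in> ballA E (X1 \<union> Q) F s")
        case True then show ?thesis using sW by auto
      next
        case False
        then obtain u where u: "u \<in> ballA E (X1 \<union> Q) F s" "E u x" using x by auto
        have "x \<in> R1" using x toR1 by blast
        then show ?thesis using u sW unfolding F'_def V'_def by auto
      qed
    qed
  next
    case (Suc t)
    show ?case
    proof
      fix x assume x: "x \<in> ballA E (X1 \<union> Q) F (s + 1 + Suc t)"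
      show "x \<in> W \<union> ballA E' Q F' (Suc t)"
      proof (cases "x \<in> ballA E (X1 \<union> Q) F (s + 1 + t)")
        case True then show ?thesis using Suc by auto
      next
        case False
        then obtain u where u: "u \<in> ballA E (X1 \<union> Q) F (s + 1 + t)" "E u x" "x \<notin> X1 \<union> Q" using x by auto
        have xR: "x \<in> R1" using x toR1 by blast
        show ?thesis
        proof (cases "x \<in> W")
          case True then show ?thesis by simp
        next
          case xW: False
          then have xV: "x \<in> V'" using xR unfolding V'_def by simp
          have "u \<in> W \<union> ballA E' Q F' t" using u Suc by blast
          then show ?thesis
          proof
            assume "u \<in> W"
            then have "x \<in> F'" using xV u unfolding F'_def by auto
            then show ?thesis using ball_mono_t[of 0 "Suc t" E' Q F'] by auto
          next
            assume uB: "u \<in> ballA E' Q F' t"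
            then have "E' u x" using ball'V xV u unfolding E'_def by blast
            then show ?thesis using uB u(3) by auto
          qed
        qed
      qed
    qed
  qed
  obtain L1 where L1a: "set L1 = X1" "distinct L1" using finite_distinct_list[OF fX1] by blast
  have L1: "set L1 = X1" "length L1 = card X1" using L1a distinct_card by metis+
  define xs where "xs = L1 @ X'"
  have setxs: "set xs = X1 \<union> set X'" unfolding xs_def using L1 by auto
  have c1: "set xs \<subseteq> V" using setxs X1V X'(1) V'V by auto
  have c2: "\<forall>j<length xs. xs!j \<notin> ballA E (set (take j xs)) F j"
  proof (intro allI impI)
    fix j assume j: "j < length xs"
    show "xs!j \<notin> ballA E (set (take j xs)) F j"
    proof (cases "j < length L1")
      case True
      have "xs!j \<in> X1" using True L1 unfolding xs_def by (auto simp: nth_append)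
      moreover have "ballA E (set (take j xs)) F j \<subseteq> W"
        using ball_anti_P[of "{}" "set (take j xs)" E F j] ball_mono_t[of j s E "{}" F] True L1 cX1
        unfolding W_def by auto
      ultimately show ?thesis using X1W by auto
    next
      case False
      define j' where "j' = j - length L1"
      have jj: "j = length L1 + j'" using False unfolding j'_def by simp
      have j'l: "j' < length X'" using j jj unfolding xs_def by simp
      have xj: "xs!j = X'!j'" unfolding xs_def jj by (simp add: nth_append)
      have tk: "set (take j xs) = X1 \<union> set (take j' X')" unfolding xs_def jj using L1 by simp
      have "ballA E (set (take j xs)) F j \<subseteq> ballA E (X1 \<union> set (take j' X')) F (s + 1 + j')"
        unfolding tk using L1 cX1 jj by (intro ball_mono_t) simp
      also have "\<dots> \<subseteq> W \<union> ballA E' (set (take j' X')) F' j'" by (rule claim)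
      finally have sub: "ballA E (set (take j xs)) F j \<subseteq> W \<union> ballA E' (set (take j' X')) F' j'" .
      have "X'!j' \<in> V'" using X'(1) j'l nth_mem by blast
      then have "X'!j' \<notin> W" unfolding V'_def by simp
      then show ?thesis using sub xj X'(2) j'l by auto
    qed
  qed
  have rsub: "reach E (set xs) F \<subseteq> W \<union> reach E' (set X') F'"
  proof
    fix x assume "x \<in> reach E (set xs) F"
    then obtain t where t: "x \<in> ballA E (X1 \<union> set X') F t" unfolding reach_def setxs by auto
    then have "x \<in> ballA E (X1 \<union> set X') F (s + 1 + t)"
      using ball_mono_t[of t "s+1+t" E "X1 \<union> set X'" F] by auto
    then show "x \<in> W \<union> reach E' (set X') F'" using claim unfolding reach_def by blast
  qed
  have fr: "finite (reach E (set xs) F)" using rsub cW X'(3) finite_subset by blast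
  have "card (reach E (set xs) F) \<le> card (W \<union> reach E' (set X') F')"
    using rsub cW X'(3) by (intro card_mono) auto
  also have "\<dots> \<le> card W + card (reach E' (set X') F')" by (rule card_Un_le)
  also have "\<dots> \<le> n*(D+1)^s + g k D n'" using cW X'(4) by simp
  finally have "card (reach E (set xs) F) \<le> g (Suc k) D n" unfolding n'_def s_def by simp
  then show ?case using c1 c2 fr by blast
qed


lemma burned_ball: "P \<inter> burned E F S t = {} \<Longrightarrow> burned E F S t \<subseteq> ballA E P F t"
  by (induction t) auto

lemma burned_mono: "t \<le> t' \<Longrightarrow> burned E F S t \<subseteq> burned E F S t'"
  by (induction t') (auto simp: le_Suc_eq)

theorem theorem2:
  fixes f1 :: "nat \<Rightarrow> nat \<Rightarrow> nat"
  shows "\<exists>f2 :: nat \<Rightarrow> nat \<Rightarrow> nat. (\<forall>p d. f1 p d \<le> f2 p d) \<and>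
    (\<forall>(V :: nat set) E F (b :: nat).
       graph V E \<longrightarrow> F \<subseteq> V \<longrightarrow>
       card F \<le> f1 (pathwidth V E) (max_degree V E) \<longrightarrow> b \<ge> 1 \<longrightarrow>
       (\<exists>S. valid_strategy V E F b S \<and>
            card (final_burned E F S) \<le> f2 (pathwidth V E) (max_degree V E)))"
proof (intro exI[of _ "\<lambda>p d. max (f1 p d) (g (Suc p) d (f1 p d))"] conjI allI impI)
  fix p d show "f1 p d \<le> max (f1 p d) (g (Suc p) d (f1 p d))" by simp
next
  fix V :: "nat set" and E F and b :: nat
  assume gr: "graph V E" and FV: "F \<subseteq> V" and cF: "card F \<le> f1 (pathwidth V E) (max_degree V E)"
    and b: "1 \<le> b"
  define pw where "pw = pathwidth V E"
  define D where "D = max_degree V E"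
  have fV: "finite V" and Ein: "\<forall>u v. E u v \<longrightarrow> u \<in> V \<and> v \<in> V" using gr unfolding graph_def by auto
  have "has_pd_of_width V E (card V)"
    unfolding has_pd_of_width_def path_decomposition_def
    by (intro exI[of _ "[V]"]) (use Ein in auto)
  then have "has_pd_of_width V E pw" unfolding pw_def pathwidth_def by (rule LeastI)
  then obtain Bs where pd: "path_decomposition V E Bs" and bags: "\<forall>B\<in>set Bs. card B \<le> Suc pw"
    unfolding has_pd_of_width_def by auto
  have deg: "\<forall>v. card {u. E v u} \<le> D"
  proof
    fix v show "card {u. E v u} \<le> D"
    proof (cases "v \<in> V")
      case True
      have "{u. E v u} = {u \<in> V. E v u}" using Ein by auto
      then have "card {u. E v u} = degree V E v" unfolding degree_def by simp
      also have "\<dots> \<le> Max (degree V E ` V)" using True fV by (intro Max_ge) auto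
      finally show ?thesis unfolding D_def max_degree_def using True by auto
    next
      case False
      then have "{u. E v u} = {}" using Ein by auto
      then show ?thesis by simp
    qed
  qed
  obtain xs where xs: "set xs \<subseteq> V" "\<forall>j<length xs. xs!j \<notin> ballA E (set (take j xs)) F j"
      "finite (reach E (set xs) F)" "card (reach E (set xs) F) \<le> g (Suc pw) D (f1 pw D)"
    using main[OF gr pd bags deg FV, of "f1 pw D"] cF unfolding pw_def D_def by blast
  define S where "S t = (case t of 0 \<Rightarrow> {} | Suc t' \<Rightarrow> if t' < length xs then {xs!t'} else {})" for t
  have prot: "protected S t = set (take t xs)" for t
  proof (induction t)
    case 0 then show ?case by (simp add: S_def)
  next
    case (Suc t)
    show ?case
    proof (cases "t < length xs")
      case True then show ?thesis using Suc by (simp add: S_def take_Suc_conv_app_nth)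
    next
      case False then show ?thesis using Suc by (simp add: S_def)
    qed
  qed
  have inv: "set (take t xs) \<inter> burned E F S t = {} \<and> (t < length xs \<longrightarrow> xs!t \<notin> burned E F S t)" for t
  proof (induction t)
    case 0
    have "F \<subseteq> ballA E (set (take 0 xs)) F 0" by simp
    then show ?case using xs(2) by auto
  next
    case (Suc t)
    have A: "set (take (Suc t) xs) \<inter> burned E F S t = {}"
    proof -
      have "set (take (Suc t) xs) \<subseteq> set (take t xs) \<union> (if t < length xs then {xs!t} else {})"
        by (auto simp: take_Suc_conv_app_nth)
      then show ?thesis using Suc by (auto split: if_splits)
    qed
    have B: "set (take (Suc t) xs) \<inter> burned E F S (Suc t) = {}"
      using A prot[of "Suc t"] by auto
    moreover have "Suc t < length xs \<longrightarrow> xs!(Suc t) \<notin> burned E F S (Suc t)"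
      using burned_ball[OF B] xs(2) by blast
    ultimately show ?case by blast
  qed
  have valid: "valid_strategy V E F b S"
    unfolding valid_strategy_def
  proof (intro allI conjI)
    fix t
    show "finite (S (Suc t))" by (simp add: S_def)
    show "card (S (Suc t)) \<le> b" using b by (simp add: S_def)
    show "S (Suc t) \<subseteq> V - burned E F S t"
      using inv[of t] xs(1) by (auto simp: S_def)
  qed
  have fb: "final_burned E F S \<subseteq> reach E (set xs) F"
  proof
    fix x assume "x \<in> final_burned E F S"
    then obtain t where t: "x \<in> burned E F S t" unfolding final_burned_def by auto
    define N where "N = max t (length xs)"
    have "x \<in> burned E F S N" using t burned_mono[of t N E F S] unfolding N_def by auto
    moreover have "set xs \<inter> burned E F S N = {}" using inv[of N] unfolding N_def by simp
    ultimately have "x \<in> ballA E (set xs) F N" using burned_ball by blast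
    then show "x \<in> reach E (set xs) F" unfolding reach_def by blast
  qed
  have "card (final_burned E F S) \<le> g (Suc pw) D (f1 pw D)"
    using card_mono[OF xs(3) fb] xs(4) by linarith
  then show "\<exists>S. valid_strategy V E F b S \<and>
            card (final_burned E F S) \<le> max (f1 (pathwidth V E) (max_degree V E))
              (g (Suc (pathwidth V E)) (max_degree V E) (f1 (pathwidth V E) (max_degree V E)))"
    using valid unfolding pw_def D_def by auto
qed

end
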